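(* Consider a splitting method (as defined in the context). Suppose there exists $\epsilon>0$ such that, with probability one, the event $$\left|\frac{\sum_{i=1}^{N_{t+1}} w_{t+1}^i}{\sum_{i=1}^{N_t} w_t^i}-1\right|>\epsilon$$ occurs for infinitely many $t$. Then, almost surely, $\sum_{i=1}^{N_t} w_t^i\to 0$ as $t\to\infty$.
   Context: Splitting method: Let $K$ be a Markov transition kernel on a measurable state space $X$ and $\mu_0$ a probability distribution on $X$. A splitting method produces, for $t=0,1,2,\dots$, particles $\xi_t^1,\dots,\xi_t^{N_t}\in X$ with weights $w_t^1,\dots,w_t^{N_t}\ge 0$, together with a filtration $\mathcal F_0\subseteq\hat{\mathcal F}_0\subseteq\mathcal F_1\subseteq\hat{\mathcal F}_1\subseteq\cdots$, as follows. Initially $\xi_0^1,\dots,\xi_0^{N_0}$ are i.i.d. with law $\mu_0$ and $w_0^i=1/N_0$. At each time $t\ge 0$: (Splitting step) for each $i$ a number $C_t^i>0$ is chosen, where $(\xi_t^i,w_t^i,C_t^i)_{1\le i\le N_t}$ is $\mathcal F_t$-measurable; random nonnegative integers $N_t^i$ are drawn with $\mathbb E[N_t^i\mid\mathcal F_t]=C_t^i$; each $\xi_t^i$ is replaced by $N_t^i$ copies, each with weight $w_t^i/C_t^i$; the resulting children are listed as $(\hat\xi_t^j,\hat w_t^j)_{1\le j\le N_{t+1}}$ with $N_{t+1}=\sum_i N_t^i$, and they are $\hat{\mathcal F}_t$-measurable. (Evolution step) conditional on $\hat{\mathcal F}_t$, the particles $\xi_{t+1}^1,\dots,\xi_{t+1}^{N_{t+1}}$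 are independent with $\xi_{t+1}^j\sim K(\hat\xi_t^j,\cdot)$, and $w_{t+1}^j=\hat w_t^j$. *)

theory Defs
  imports "HOL-Probability.Probability" "HOL-Library.Multiset"
begin

text \<open>Indices are 0-based: particle i at time t exists iff i < N t.
  M: underlying probability space (outcomes of type 'a); X: state space;
  K: Markov kernel; mu0: initial law; N0: initial number of particles;
  F t, Fh t: the filtration F_t, hat F_t;  xi t i, w t i, C t i: particles, weights, C_t^i;
  Ns t i: the offspring numbers N_t^i;  hxi t j, hw t j: the children (hat xi, hat w).\<close>

definition splitting_method ::
  "'a measure \<Rightarrow> 'x measure \<Rightarrow> ('x \<Rightarrow> 'x measure) \<Rightarrow> 'x measure \<Rightarrow> nat \<Rightarrow>
   (nat \<Rightarrow> 'a measure) \<Rightarrow> (nat \<Rightarrow> 'a measure) \<Rightarrow> (nat \<Rightarrow> 'a \<Rightarrow> nat) \<Rightarrow>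
   (nat \<Rightarrow> nat \<Rightarrow> 'a \<Rightarrow> 'x) \<Rightarrow> (nat \<Rightarrow> nat \<Rightarrow> 'a \<Rightarrow> real) \<Rightarrow> (nat \<Rightarrow> nat \<Rightarrow> 'a \<Rightarrow> real) \<Rightarrow>
   (nat \<Rightarrow> nat \<Rightarrow> 'a \<Rightarrow> nat) \<Rightarrow> (nat \<Rightarrow> nat \<Rightarrow> 'a \<Rightarrow> 'x) \<Rightarrow> (nat \<Rightarrow> nat \<Rightarrow> 'a \<Rightarrow> real) \<Rightarrow> bool"
where
  "splitting_method M X K mu0 N0 F Fh N xi w C Ns hxi hw \<longleftrightarrow>
     prob_space M \<and>
     K \<in> measurable X (prob_algebra X) \<and>
     prob_space mu0 \<and> sets mu0 = sets X \<and>
     \<comment> \<open>filtration F_0 \<subseteq> hat F_0 \<subseteq> F_1 \<subseteq> ...\<close>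
     (\<forall>t. subalgebra M (F t) \<and> subalgebra M (Fh t) \<and>
          sets (F t) \<subseteq> sets (Fh t) \<and> sets (Fh t) \<subseteq> sets (F (Suc t))) \<and>
     \<comment> \<open>initialisation\<close>
     (\<forall>\<omega>\<in>space M. N 0 \<omega> = N0) \<and>
     prob_space.indep_vars M (\<lambda>_. X) (xi 0) {..<N0} \<and>
     (\<forall>i<N0. distr M X (xi 0 i) = mu0) \<and>
     (\<forall>\<omega>\<in>space M. \<forall>i<N0. w 0 i \<omega> = 1 / real N0) \<and>
     (\<forall>t.
        \<comment> \<open>(xi_t^i, w_t^i, C_t^i)_{i<N_t} is F_t-measurable\<close>
        N t \<in> measurable (F t) (count_space UNIV) \<and>
        (\<forall>i. xi t i \<in> measurable (restrict_space (F t) {\<omega>. i < N t \<omega>}) X) \<and>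
        (\<forall>i. w t i \<in> borel_measurable (restrict_space (F t) {\<omega>. i < N t \<omega>})) \<and>
        (\<forall>i. C t i \<in> borel_measurable (restrict_space (F t) {\<omega>. i < N t \<omega>})) \<and>
        (\<forall>\<omega>\<in>space M. \<forall>i<N t \<omega>. C t i \<omega> > 0 \<and> w t i \<omega> \<ge> 0) \<and>
        \<comment> \<open>splitting: N_t^i random nonnegative integers with E[N_t^i | F_t] = C_t^i\<close>
        (\<forall>i. Ns t i \<in> measurable M (count_space UNIV)) \<and>
        (\<forall>i. \<forall>A\<in>sets (F t).
            (\<integral>\<^sup>+\<omega>. indicator (A \<inter> {\<omega>. i < N t \<omega>}) \<omega> * of_nat (Ns t i \<omega>) \<partial>M)
          = (\<integral>\<^sup>+\<omega>. indicator (A \<inter> {\<omega>. i < N t \<omega>}) \<omega> * ennreal (C t i \<omega>) \<partial>M)) \<and>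
        (\<forall>\<omega>\<in>space M. N (Suc t) \<omega> = (\<Sum>i<N t \<omega>. Ns t i \<omega>)) \<and>
        \<comment> \<open>children: N_t^i copies of xi_t^i with weight w_t^i / C_t^i, listed in some order\<close>
        (\<forall>\<omega>\<in>space M.
            mset (map (\<lambda>j. (hxi t j \<omega>, hw t j \<omega>)) [0..<N (Suc t) \<omega>])
          = (\<Sum>i<N t \<omega>. replicate_mset (Ns t i \<omega>) (xi t i \<omega>, w t i \<omega> / C t i \<omega>))) \<and>
        \<comment> \<open>the children are hat F_t-measurable\<close>
        N (Suc t) \<in> measurable (Fh t) (count_space UNIV) \<and>
        (\<forall>j. hxi t j \<in> measurable (restrict_space (Fh t) {\<omega>. j < N (Suc t) \<omega>}) X) \<and>
        (\<forall>j. hw t j \<in> borel_measurable (restrict_space (Fh t) {\<omega>. j < N (Suc t) \<omega>})) \<and>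
        \<comment> \<open>evolution: given hat F_t, xi_{t+1}^j independent with laws K(hat xi_t^j, .)\<close>
        (\<forall>A\<in>sets (Fh t). \<forall>n. \<forall>B. (\<forall>j<n. B j \<in> sets X) \<longrightarrow>
            emeasure M (A \<inter> {\<omega>\<in>space M. N (Suc t) \<omega> = n \<and> (\<forall>j<n. xi (Suc t) j \<omega> \<in> B j)})
          = (\<integral>\<^sup>+\<omega>. indicator (A \<inter> {\<omega>\<in>space M. N (Suc t) \<omega> = n}) \<omega> *
                 (\<Prod>j<n. emeasure (K (hxi t j \<omega>)) (B j)) \<partial>M)) \<and>
        (\<forall>\<omega>\<in>space M. \<forall>j<N (Suc t) \<omega>. w (Suc t) j \<omega> = hw t j \<omega>))"

definition total_weight :: "(nat \<Rightarrow> 'a \<Rightarrow> nat) \<Rightarrow> (nat \<Rightarrow> nat \<Rightarrow> 'a \<Rightarrow> real) \<Rightarrow> nat \<Rightarrow> 'a \<Rightarrow> real"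
  where "total_weight N w t \<omega> = (\<Sum>i<N t \<omega>. w t i \<omega>)"

end

theory Submission
  imports Defs
begin



fun upB :: "(nat \<Rightarrow> 'a \<Rightarrow> real) \<Rightarrow> real \<Rightarrow> real \<Rightarrow> nat \<Rightarrow> 'a \<Rightarrow> bool" where
  "upB W a b 0 x = (W 0 x \<le> a)"
| "upB W a b (Suc n) x = (if upB W a b n x then W (Suc n) x < b else W (Suc n) x \<le> a)"

fun upU :: "(nat \<Rightarrow> 'a \<Rightarrow> real) \<Rightarrow> real \<Rightarrow> real \<Rightarrow> nat \<Rightarrow> 'a \<Rightarrow> nat" where
  "upU W a b 0 x = 0"
| "upU W a b (Suc n) x = upU W a b n x + (if upB W a b n x \<and> \<not> upB W a b (Suc n) x then 1 else 0)"

lemma up_inv: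
  assumes "a < b"
  shows "(b-a) * upU W a b n x + (if upB W a b n x then W n x - a else 0)
     \<le> (\<Sum>k<n. if upB W a b k x then W (Suc k) x - W k x else 0)"
proof (induction n)
  case 0
  then show ?case by simp
next
  case (Suc n)
  show ?case
  proof (cases "upB W a b n x")
    case True
    then show ?thesis using Suc assms by (auto simp: algebra_simps)
  next
    case False
    then show ?thesis using Suc assms by (auto simp: algebra_simps)
  qed
qed

lemma up_ineq:
  assumes "a < b" "\<And>n. W n x \<ge> 0"
  shows "(b-a) * upU W a b n x + (\<Sum>k<n. if upB W a b k x then W k x else 0)
     \<le> (\<Sum>k<n. if upB W a b k x then W (Suc k) x else 0) + \<bar>a\<bar>"
proof -
  have e: "(\<Sum>k<n. if upB W a b k x then W (Suc k) x - W k x else 0)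
     = (\<Sum>k<n. if upB W a b k x then W (Suc k) x else 0) - (\<Sum>k<n. if upB W a b k x then W k x else 0)"
    by (simp add: sum_subtractf[symmetric] if_distrib cong: if_cong) 
  have "(if upB W a b n x then W n x - a else 0) \<ge> - \<bar>a\<bar>" using assms(2)[of n] by auto
  then show ?thesis using up_inv[OF assms(1), of W n x] e by linarith
qed

lemma upU_mono: "m \<le> n \<Longrightarrow> upU W a b m x \<le> upU W a b n x"
  by (induction n) (auto simp: le_Suc_eq)

lemma nat_le_ceil: "real u \<le> K \<Longrightarrow> u \<le> nat \<lceil>K\<rceil>"
proof -
  assume "real u \<le> K"
  then have "int u \<le> \<lceil>K\<rceil>" by (metis ceiling_mono ceiling_of_nat of_int_of_nat_eq)
  then show ?thesis by linarith
qed

lemma up_bounded: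
  assumes "\<And>n. real (upU W a b n x) \<le> K"
  shows "(\<forall>\<^sub>F n in sequentially. W n x < b) \<or> (\<forall>\<^sub>F n in sequentially. W n x > a)"
proof -
  let ?R = "range (\<lambda>n. upU W a b n x)"
  have "?R \<subseteq> {..nat \<lceil>K\<rceil>}" using assms nat_le_ceil by auto
  then have fin: "finite ?R" by (rule finite_subset) auto
  obtain m where m: "upU W a b m x = Max ?R" using Max_in[OF fin] by auto
  have const: "upU W a b n x = upU W a b m x" if "n \<ge> m" for n
    using upU_mono[OF that, of W a b x] Max_ge[OF fin, of "upU W a b n x"] m by auto
  have step: "upB W a b n x \<longrightarrow> upB W a b (Suc n) x" if "n \<ge> m" for n
    using const[of n] const[of "Suc n"] that by (auto split: if_splits)
  show ?thesis
  proof (cases "\<exists>n\<ge>m. upB W a b n x")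
    case True
    then obtain n where n: "n \<ge> m" "upB W a b n x" by auto
    have all: "upB W a b (n+j) x" for j
      by (induction j) (use n step in auto)
    have "W (Suc (n+j)) x < b" for j using all[of j] all[of "Suc j"] by (auto split: if_splits)
    then have "\<forall>\<^sub>F k in sequentially. W k x < b"
      apply (intro eventually_sequentiallyI[of "Suc n"])
      subgoal for k by (metis Suc_le_D Suc_le_mono le_Suc_ex)
      done
    then show ?thesis by simp
  next
    case False
    have "W (Suc j) x > a" if "j \<ge> m" for j using False that
      by (metis le_SucI not_le upB.simps(2))
    then have "\<forall>\<^sub>F k in sequentially. W k x > a"
      apply (intro eventually_sequentiallyI[of "Suc m"])
      subgoal for k by (metis Suc_le_D Suc_le_mono)
      done
    then show ?thesis by simp
  qed
qed




lemma final_path: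
  fixes v :: "nat \<Rightarrow> real"
  assumes nn: "\<And>n. v n \<ge> 0"
  and ud: "\<And>a b. a \<in> \<rat> \<Longrightarrow> b \<in> \<rat> \<Longrightarrow> a < b \<Longrightarrow>
       (\<forall>\<^sub>F n in sequentially. v n < b) \<or> (\<forall>\<^sub>F n in sequentially. v n > a)"
  and nt: "\<not> filterlim v at_top sequentially"
  and fr: "\<exists>\<^sub>F t in sequentially. \<epsilon> < \<bar>v (Suc t) / v t - 1\<bar>" and ep: "\<epsilon> > 0"
  shows "v \<longlonglongrightarrow> 0"
proof -
  define S where "S = {q. q \<in> \<rat> \<and> (\<forall>\<^sub>F n in sequentially. v n > q)}"
  have "v n > -1" for n using nn[of n] by linarith
  then have m1: "-1 \<in> S" unfolding S_def by (auto intro!: always_eventually)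
  have bdd: "bdd_above S"
  proof (rule ccontr)
    assume "\<not> bdd_above S"
    have "\<forall>\<^sub>F n in sequentially. Z \<le> v n" for Z
    proof -
      obtain q where "q \<in> S" "\<not> q \<le> Z" using \<open>\<not> bdd_above S\<close> unfolding bdd_above_def by blast
      then show ?thesis unfolding S_def by (auto elim: eventually_mono)
    qed
    then have "\<forall>Z. \<forall>\<^sub>F n in sequentially. Z \<le> v n" by blast
    then show False using nt filterlim_at_top by blast
  qed
  define s where "s = Sup S"
  have lim: "v \<longlonglongrightarrow> s"
  proof (rule order_tendstoI)
    fix c assume "c < s"
    then obtain q where "q \<in> S" "c < q" using less_cSupD[of S c] m1 unfolding s_def by blast
    then show "\<forall>\<^sub>F n in sequentially. c < v n" unfolding S_def
      by (auto elim: eventually_mono)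
  next
    fix c assume "s < c"
    obtain q1 where q1: "q1 \<in> \<rat>" "s < q1" "q1 < c" using Rats_dense_in_real[OF \<open>s < c\<close>] by blast
    obtain q2 where q2: "q2 \<in> \<rat>" "q1 < q2" "q2 < c" using Rats_dense_in_real[OF \<open>q1 < c\<close>] by blast
    have "q1 \<notin> S" using cSup_upper[OF _ bdd, of q1] q1 unfolding s_def by auto
    then have "\<not> (\<forall>\<^sub>F n in sequentially. v n > q1)" using q1 unfolding S_def by auto
    then have "\<forall>\<^sub>F n in sequentially. v n < q2" using ud[OF q1(1) q2(1) q2(2)] by blast
    then show "\<forall>\<^sub>F n in sequentially. v n < c" using q2 by (auto elim: eventually_mono)
  qed
  have s0: "s \<ge> 0" using lim nn by (intro LIMSEQ_le_const) auto
  have "s = 0"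
  proof (rule ccontr)
    assume "s \<noteq> 0"
    with s0 have sp: "s > 0" by auto
    have "(\<lambda>t. v (Suc t) / v t) \<longlonglongrightarrow> s / s"
      by (intro tendsto_divide LIMSEQ_Suc lim) (use sp in auto)
    then have "(\<lambda>t. v (Suc t) / v t) \<longlonglongrightarrow> 1" using sp by simp
    then have "\<forall>\<^sub>F t in sequentially. dist (v (Suc t) / v t) 1 < \<epsilon>" using ep by (rule tendstoD)
    then have "\<forall>\<^sub>F t in sequentially. \<not> (\<epsilon> < \<bar>v (Suc t) / v t - 1\<bar>)"
      by (auto simp: dist_real_def elim: eventually_mono)
    then show False using fr by (simp add: frequently_def)
  qed
  then show ?thesis using lim by simp
qed




lemma supermart_upcross:
  assumes P: "prob_space M"
  and sub: "\<And>t. subalgebra M (F t)" and mono: "\<And>t. sets (F t) \<subseteq> sets (F (Suc t))"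
  and Wm: "\<And>t. W t \<in> borel_measurable (F t)"
  and Wnn: "\<And>t x. x \<in> space M \<Longrightarrow> W t x \<ge> 0"
  and sup: "\<And>t A. A \<in> sets (F t) \<Longrightarrow> (\<integral>\<^sup>+x. indicator A x * ennreal (W (Suc t) x) \<partial>M) \<le> (\<integral>\<^sup>+x. indicator A x * ennreal (W t x) \<partial>M)"
  and fin: "(\<integral>\<^sup>+x. ennreal (W 0 x) \<partial>M) < \<infinity>"
  and ab: "a < b"
  shows "AE x in M. (\<forall>\<^sub>F n in sequentially. W n x < b) \<or> (\<forall>\<^sub>F n in sequentially. W n x > a)"
proof -
  interpret prob_space M by (rule P)
  have spF: "space (F t) = space M" for t using sub[of t] by (simp add: subalgebra_def)
  have monoF: "sets (F j) \<subseteq> sets (F k)" if "j \<le> k" for j k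
    using that proof (induction k)
    case 0 then show ?case by simp
  next
    case (Suc k) then show ?case using mono[of k] by (auto simp: le_Suc_eq)
  qed
  have subF: "subalgebra (F k) (F j)" if "j \<le> k" for j k
    using monoF[OF that] spF unfolding subalgebra_def by auto
  have WmF: "W j \<in> borel_measurable (F k)" if "j \<le> k" for j k
    by (rule measurable_from_subalg[OF subF[OF that] Wm])
  have WmM: "W j \<in> borel_measurable M" for j
    by (rule measurable_from_subalg[OF sub Wm])
  have Bm: "Measurable.pred (F k) (upB W a b k)" for k
  proof (induction k)
    case 0
    note [measurable] = Wm[of 0]
    show ?case by simp
  next
    case (Suc k)
    have [measurable]: "Measurable.pred (F (Suc k)) (upB W a b k)"
      by (rule measurable_from_subalg[OF subF Suc]) simp
    note [measurable] = Wm[of "Suc k"]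
    show ?case by simp
  qed
  have BmM: "Measurable.pred M (upB W a b k)" for k
    by (rule measurable_from_subalg[OF sub Bm])
  note [measurable] = WmM BmM
  define I1 where "I1 k = (\<integral>\<^sup>+x. ennreal (if upB W a b k x then W k x else 0) \<partial>M)" for k
  define I2 where "I2 k = (\<integral>\<^sup>+x. ennreal (if upB W a b k x then W (Suc k) x else 0) \<partial>M)" for k
  have EW: "(\<integral>\<^sup>+x. ennreal (W k x) \<partial>M) \<le> (\<integral>\<^sup>+x. ennreal (W 0 x) \<partial>M)" for k
  proof (induction k)
    case 0 then show ?case by simp
  next
    case (Suc k)
    have sp: "space M \<in> sets (F k)" using sets.top[of "F k"] spF by simp
    have ii: "(\<integral>\<^sup>+x. indicator (space M) x * ennreal (W j x) \<partial>M) = (\<integral>\<^sup>+x. ennreal (W j x) \<partial>M)" for j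
      by (rule nn_integral_cong) simp
    from sup[OF sp] have "(\<integral>\<^sup>+x. ennreal (W (Suc k) x) \<partial>M) \<le> (\<integral>\<^sup>+x. ennreal (W k x) \<partial>M)"
      unfolding ii .
    then show ?case using Suc by simp
  qed
  have I21: "I2 k \<le> I1 k" for k
  proof -
    have A: "{x \<in> space M. upB W a b k x} \<in> sets (F k)"
      using Bm[of k] spF[of k] by (metis (no_types) Measurable.predE)
    have "I2 k = (\<integral>\<^sup>+x. indicator {x \<in> space M. upB W a b k x} x * ennreal (W (Suc k) x) \<partial>M)"
      unfolding I2_def by (intro nn_integral_cong) (auto simp: indicator_def)
    also have "\<dots> \<le> (\<integral>\<^sup>+x. indicator {x \<in> space M. upB W a b k x} x * ennreal (W k x) \<partial>M)"
      by (rule sup[OF A])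
    also have "\<dots> = I1 k"
      unfolding I1_def by (intro nn_integral_cong) (auto simp: indicator_def)
    finally show ?thesis .
  qed
  have I1fin: "I1 k < \<infinity>" for k
  proof -
    have "I1 k \<le> (\<integral>\<^sup>+x. ennreal (W k x) \<partial>M)"
      unfolding I1_def by (intro nn_integral_mono) (auto intro: ennreal_leI simp: Wnn)
    also have "\<dots> < \<infinity>" using EW[of k] fin by (meson le_less_trans)
    finally show ?thesis .
  qed
  define V where "V n x = ennreal ((b-a) * real (upU W a b n x))" for n x
  have Vm[measurable]: "V n \<in> borel_measurable M" for n
  proof -
    have "(\<lambda>x. upU W a b n x) \<in> measurable M (count_space UNIV)"
    proof (induction n)
      case 0 then show ?case by simp
    next
      case (Suc n)
      note [measurable] = Suc
      show ?case by simp
    qed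
    then show ?thesis unfolding V_def by measurable
  qed
  have EV: "(\<integral>\<^sup>+x. V n x \<partial>M) \<le> ennreal \<bar>a\<bar>" for n
  proof -
    have pw: "V n x + (\<Sum>k<n. ennreal (if upB W a b k x then W k x else 0))
       \<le> (\<Sum>k<n. ennreal (if upB W a b k x then W (Suc k) x else 0)) + ennreal \<bar>a\<bar>" if x: "x \<in> space M" for x
    proof -
      have nn1: "0 \<le> (b-a) * real (upU W a b n x)" using ab by simp
      have nn2: "0 \<le> (\<Sum>k<n. if upB W a b k x then W k x else 0)" by (intro sum_nonneg) (auto simp: Wnn x)
      have nn3: "0 \<le> (\<Sum>k<n. if upB W a b k x then W (Suc k) x else 0)" by (intro sum_nonneg) (auto simp: Wnn x)
      have "ennreal ((b-a) * real (upU W a b n x) + (\<Sum>k<n. if upB W a b k x then W k x else 0))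
          \<le> ennreal ((\<Sum>k<n. if upB W a b k x then W (Suc k) x else 0) + \<bar>a\<bar>)"
        by (intro ennreal_leI up_ineq ab) (simp add: Wnn x)
      then show ?thesis unfolding V_def
        using nn1 nn2 nn3 by (simp add: ennreal_plus Wnn x)
    qed
    have "(\<integral>\<^sup>+x. V n x \<partial>M) + (\<Sum>k<n. I1 k)
        = (\<integral>\<^sup>+x. V n x + (\<Sum>k<n. ennreal (if upB W a b k x then W k x else 0)) \<partial>M)"
      unfolding I1_def by (simp add: nn_integral_add nn_integral_sum)
    also have "\<dots> \<le> (\<integral>\<^sup>+x. (\<Sum>k<n. ennreal (if upB W a b k x then W (Suc k) x else 0)) + ennreal \<bar>a\<bar> \<partial>M)"
      by (intro nn_integral_mono pw)
    also have "\<dots> = (\<Sum>k<n. I2 k) + ennreal \<bar>a\<bar>"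
      unfolding I2_def by (simp add: nn_integral_add nn_integral_sum emeasure_space_1)
    also have "\<dots> \<le> (\<Sum>k<n. I1 k) + ennreal \<bar>a\<bar>"
      by (intro add_mono sum_mono I21) auto
    finally have "(\<Sum>k<n. I1 k) + (\<integral>\<^sup>+x. V n x \<partial>M) \<le> (\<Sum>k<n. I1 k) + ennreal \<bar>a\<bar>"
      by (simp add: add.commute)
    moreover have "(\<Sum>k<n. I1 k) \<noteq> \<infinity>" using I1fin by (simp add: ennreal_sum_eq_top less_top)
    ultimately show ?thesis by (simp add: ennreal_add_left_cancel_le)
  qed
  have incV: "incseq (\<lambda>n. V n x)" for x
    unfolding V_def incseq_def using ab
    by (auto intro!: ennreal_leI mult_left_mono upU_mono)
  have "(\<integral>\<^sup>+x. (SUP n. V n x) \<partial>M) = (SUP n. \<integral>\<^sup>+x. V n x \<partial>M)"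
    by (intro nn_integral_monotone_convergence_SUP) (auto simp: incseq_def le_fun_def incV[unfolded incseq_def])
  also have "\<dots> \<le> ennreal \<bar>a\<bar>" by (intro SUP_least EV)
  finally have "(\<integral>\<^sup>+x. (SUP n. V n x) \<partial>M) \<noteq> \<infinity>" by (auto simp: top_unique)
  then have "AE x in M. (SUP n. V n x) \<noteq> \<infinity>"
    by (intro nn_integral_noteq_infinite) measurable
  then show ?thesis
  proof (rule AE_mp, intro AE_I2 impI)
    fix x assume x: "x \<in> space M" and S: "(SUP n. V n x) \<noteq> \<infinity>"
    obtain r where r: "(SUP n. V n x) = ennreal r" "r \<ge> 0" using S by (cases "(SUP n. V n x)") auto
    have "real (upU W a b n x) \<le> r / (b-a)" for n
    proof -
      have "V n x \<le> ennreal r" using r by (metis SUP_upper UNIV_I)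
      then have "(b-a) * real (upU W a b n x) \<le> r" unfolding V_def using r ab by (simp add: ennreal_le_iff)
      then show ?thesis using ab by (simp add: field_simps)
    qed
    then show "(\<forall>\<^sub>F n in sequentially. W n x < b) \<or> (\<forall>\<^sub>F n in sequentially. W n x > a)"
      by (rule up_bounded)
  qed
qed

lemma supermart_fatou:
  assumes P: "prob_space M"
  and Wm: "\<And>t. W t \<in> borel_measurable M"
  and EW: "\<And>t. (\<integral>\<^sup>+x. ennreal (W t x) \<partial>M) \<le> (\<integral>\<^sup>+x. ennreal (W 0 x) \<partial>M)"
  and fin: "(\<integral>\<^sup>+x. ennreal (W 0 x) \<partial>M) < \<infinity>"
  shows "AE x in M. \<not> filterlim (\<lambda>n. W n x) at_top sequentially"
proof -
  note [measurable] = Wm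
  have "(\<integral>\<^sup>+ x. liminf (\<lambda>n. ennreal (W n x)) \<partial>M) \<le> liminf (\<lambda>n. (\<integral>\<^sup>+x. ennreal (W n x) \<partial>M))"
    by (intro nn_integral_liminf) measurable
  also have "\<dots> \<le> limsup (\<lambda>n. (\<integral>\<^sup>+x. ennreal (W n x) \<partial>M))" by (rule Liminf_le_Limsup) simp
  also have "\<dots> \<le> (\<integral>\<^sup>+x. ennreal (W 0 x) \<partial>M)" by (intro Limsup_bounded always_eventually allI EW)
  finally have "(\<integral>\<^sup>+ x. liminf (\<lambda>n. ennreal (W n x)) \<partial>M) \<noteq> \<infinity>" using fin by (auto simp: top_unique)
  then have "AE x in M. liminf (\<lambda>n. ennreal (W n x)) \<noteq> \<infinity>"
    by (intro nn_integral_noteq_infinite) measurable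
  then show ?thesis
  proof (rule AE_mp, intro AE_I2 impI notI)
    fix x assume L: "liminf (\<lambda>n. ennreal (W n x)) \<noteq> \<infinity>" and T: "filterlim (\<lambda>n. W n x) at_top sequentially"
    have "\<infinity> \<le> liminf (\<lambda>n. ennreal (W n x))"
    proof (subst le_Liminf_iff, intro allI impI)
      fix y :: ennreal assume "y < \<infinity>"
      then obtain r where r: "y = ennreal r" "r \<ge> 0" by (cases y) auto
      have "\<forall>\<^sub>F n in sequentially. r + 1 \<le> W n x" using T by (simp add: filterlim_at_top)
      then show "\<forall>\<^sub>F n in sequentially. y < ennreal (W n x)"
        by (rule eventually_mono) (use r in \<open>auto intro!: ennreal_lessI\<close>)
    qed
    with L show False by (simp add: top_unique)
  qed
qed




lemma cond_ext:
  assumes sub: "subalgebra M G"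
  and Nm: "Nr \<in> borel_measurable M" and Cm: "Cr \<in> borel_measurable M"
  and h: "\<And>A. A \<in> sets G \<Longrightarrow> (\<integral>\<^sup>+x. indicator A x * Nr x \<partial>M) = (\<integral>\<^sup>+x. indicator A x * Cr x \<partial>M)"
  and g: "g \<in> borel_measurable G"
  shows "(\<integral>\<^sup>+x. g x * Nr x \<partial>M) = (\<integral>\<^sup>+x. g x * Cr x \<partial>M)"
  using g
proof (induction rule: borel_measurable_induct)
  case (cong f g)
  have sp: "space G = space M" using sub by (simp add: subalgebra_def)
  have "(\<integral>\<^sup>+x. f x * Nr x \<partial>M) = (\<integral>\<^sup>+x. g x * Nr x \<partial>M)"
    by (rule nn_integral_cong) (use cong sp in auto)
  moreover have "(\<integral>\<^sup>+x. f x * Cr x \<partial>M) = (\<integral>\<^sup>+x. g x * Cr x \<partial>M)"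
    by (rule nn_integral_cong) (use cong sp in auto)
  ultimately show ?case using cong by simp
next
  case (set A)
  then show ?case by (rule h)
next
  case (mult u c)
  have um: "u \<in> borel_measurable M" by (rule measurable_from_subalg[OF sub mult(2)])
  have "(\<integral>\<^sup>+x. c * u x * Nr x \<partial>M) = c * (\<integral>\<^sup>+x. u x * Nr x \<partial>M)"
    by (subst nn_integral_cmult[symmetric]) (use um Nm in \<open>auto simp: mult.assoc\<close>)
  moreover have "(\<integral>\<^sup>+x. c * u x * Cr x \<partial>M) = c * (\<integral>\<^sup>+x. u x * Cr x \<partial>M)"
    by (subst nn_integral_cmult[symmetric]) (use um Cm in \<open>auto simp: mult.assoc\<close>)
  ultimately show ?case using mult by simp
next
  case (add u v)
  have um: "u \<in> borel_measurable M" by (rule measurable_from_subalg[OF sub \<open>u \<in> borel_measurable G\<close>])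
  have vm: "v \<in> borel_measurable M" by (rule measurable_from_subalg[OF sub \<open>v \<in> borel_measurable G\<close>])
  have "(\<integral>\<^sup>+x. (v x + u x) * Nr x \<partial>M) = (\<integral>\<^sup>+x. v x * Nr x \<partial>M) + (\<integral>\<^sup>+x. u x * Nr x \<partial>M)"
    by (subst nn_integral_add[symmetric]) (use um vm Nm in \<open>auto simp: distrib_right\<close>)
  moreover have "(\<integral>\<^sup>+x. (v x + u x) * Cr x \<partial>M) = (\<integral>\<^sup>+x. v x * Cr x \<partial>M) + (\<integral>\<^sup>+x. u x * Cr x \<partial>M)"
    by (subst nn_integral_add[symmetric]) (use um vm Cm in \<open>auto simp: distrib_right\<close>)
  ultimately show ?case using add by simp
next
  case (seq U)
  have Um: "U i \<in> borel_measurable M" for i by (rule measurable_from_subalg[OF sub seq(1)])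
  have eq: "(SUP i. U i) x * R x = (SUP i. U i x * R x)" for x and R :: "'a \<Rightarrow> ennreal"
    by (simp add: SUP_mult_right_ennreal image_image)
  have inc: "incseq (\<lambda>i x. U i x * R x)" for R :: "'a \<Rightarrow> ennreal"
    using \<open>incseq U\<close> by (auto simp: incseq_def le_fun_def intro: mult_right_mono)
  have "(\<integral>\<^sup>+x. (SUP i. U i) x * Nr x \<partial>M) = (SUP i. \<integral>\<^sup>+x. U i x * Nr x \<partial>M)"
    unfolding eq by (rule nn_integral_monotone_convergence_SUP[OF inc]) (use Um Nm in auto)
  moreover have "(\<integral>\<^sup>+x. (SUP i. U i) x * Cr x \<partial>M) = (SUP i. \<integral>\<^sup>+x. U i x * Cr x \<partial>M)"
    unfolding eq by (rule nn_integral_monotone_convergence_SUP[OF inc]) (use Um Cm in auto)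
  ultimately show ?case using seq by simp
qed

lemma ims: "image_mset f (\<Sum>i\<in>I. A i) = (\<Sum>i\<in>I. image_mset f (A i))"
  by (induction I rule: infinite_finite_induct) auto

lemma sms: "sum_mset (\<Sum>i\<in>I. A i) = (\<Sum>i\<in>I. sum_mset (A i :: real multiset))"
  by (induction I rule: infinite_finite_induct) auto

lemma child_sum:
  assumes "mset (map (\<lambda>j. (hx j, hw j)) [0..<n]) = (\<Sum>i<m. replicate_mset (k i) (x i, v i :: real))"
  shows "(\<Sum>j<n. hw j) = (\<Sum>i<m. real (k i) * v i)"
proof -
  have "sum_mset (image_mset snd (mset (map (\<lambda>j. (hx j, hw j)) [0..<n])))
      = sum_mset (image_mset snd (\<Sum>i<m. replicate_mset (k i) (x i, v i)))" using assms by simp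
  moreover have "sum_mset (image_mset snd (mset (map (\<lambda>j. (hx j, hw j)) [0..<n']))) = (\<Sum>j<n'. hw j)" for n'
    by (induction n') auto
  moreover have "image_mset snd (\<Sum>i<m. replicate_mset (k i) (x i, v i)) = (\<Sum>i<m. replicate_mset (k i) (v i))"
    by (simp only: ims) simp
  moreover have "sum_mset (\<Sum>i<m. replicate_mset (k i) (v i)) = (\<Sum>i<m. real (k i) * v i)"
    by (simp only: sms) simp
  ultimately show ?thesis by simp
qed

lemma tw_meas:
  assumes Nm: "N t \<in> measurable G (count_space UNIV)"
  and wm: "\<And>i. w t i \<in> borel_measurable (restrict_space G {\<omega>. i < N t \<omega>})"
  shows "total_weight N w t \<in> borel_measurable G"
proof -
  define w' where "w' i x = indicator {\<omega>. i < N t \<omega>} x *\<^sub>R w t i x" for i x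
  have Om: "{\<omega>. i < N t \<omega>} \<inter> space G \<in> sets G" for i
  proof -
    have "{\<omega> \<in> space G. i < N t \<omega>} \<in> sets G" using Nm by measurable
    then show ?thesis by (simp add: Int_commute Collect_conj_eq[symmetric] Int_def)
  qed
  have w'm: "w' i \<in> borel_measurable G" for i
    using wm[of i] unfolding w'_def by (subst (asm) borel_measurable_restrict_space_iff[OF Om]) 
  have "(\<lambda>x. (\<lambda>n x. \<Sum>i<n. w' i x) (N t x) x) \<in> borel_measurable G"
    by (rule measurable_compose_countable'[OF _ Nm]) (use w'm in auto)
  moreover have "(\<lambda>x. (\<lambda>n x. \<Sum>i<n. w' i x) (N t x) x) = total_weight N w t"
    by (auto simp: total_weight_def w'_def fun_eq_iff intro!: sum.cong)
  ultimately show ?thesis by simp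
qed




lemma sm_extract:
  assumes "splitting_method M X K mu0 N0 F Fh N xi w C Ns hxi hw"
  shows "prob_space M" "\<And>t. subalgebra M (F t)" "\<And>t. sets (F t) \<subseteq> sets (F (Suc t))"
   "\<And>\<omega>. \<omega> \<in> space M \<Longrightarrow> N 0 \<omega> = N0"
   "\<And>\<omega> i. \<omega> \<in> space M \<Longrightarrow> i < N0 \<Longrightarrow> w 0 i \<omega> = 1 / real N0"
   "\<And>t. N t \<in> measurable (F t) (count_space UNIV)"
   "\<And>t i. w t i \<in> borel_measurable (restrict_space (F t) {\<omega>. i < N t \<omega>})"
   "\<And>t i. C t i \<in> borel_measurable (restrict_space (F t) {\<omega>. i < N t \<omega>})"
   "\<And>t \<omega> i. \<omega> \<in> space M \<Longrightarrow> i < N t \<omega> \<Longrightarrow> C t i \<omega> > 0"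
   "\<And>t \<omega> i. \<omega> \<in> space M \<Longrightarrow> i < N t \<omega> \<Longrightarrow> w t i \<omega> \<ge> 0"
   "\<And>t i. Ns t i \<in> measurable M (count_space UNIV)"
   "\<And>t i A. A \<in> sets (F t) \<Longrightarrow> (\<integral>\<^sup>+\<omega>. indicator (A \<inter> {\<omega>. i < N t \<omega>}) \<omega> * of_nat (Ns t i \<omega>) \<partial>M)
          = (\<integral>\<^sup>+\<omega>. indicator (A \<inter> {\<omega>. i < N t \<omega>}) \<omega> * ennreal (C t i \<omega>) \<partial>M)"
   "\<And>t \<omega>. \<omega> \<in> space M \<Longrightarrow> mset (map (\<lambda>j. (hxi t j \<omega>, hw t j \<omega>)) [0..<N (Suc t) \<omega>])
          = (\<Sum>i<N t \<omega>. replicate_mset (Ns t i \<omega>) (xi t i \<omega>, w t i \<omega> / C t i \<omega>))"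
   "\<And>t \<omega> j. \<omega> \<in> space M \<Longrightarrow> j < N (Suc t) \<omega> \<Longrightarrow> w (Suc t) j \<omega> = hw t j \<omega>"
proof -
  note sm = assms[unfolded splitting_method_def]
  note filt = sm[THEN conjunct2, THEN conjunct2, THEN conjunct2, THEN conjunct2, THEN conjunct1]
  note N0f = sm[THEN conjunct2, THEN conjunct2, THEN conjunct2, THEN conjunct2, THEN conjunct2, THEN conjunct1]
  note w0f = sm[THEN conjunct2, THEN conjunct2, THEN conjunct2, THEN conjunct2, THEN conjunct2, THEN conjunct2, THEN conjunct2, THEN conjunct2, THEN conjunct1]
  note big = sm[THEN conjunct2, THEN conjunct2, THEN conjunct2, THEN conjunct2, THEN conjunct2, THEN conjunct2, THEN conjunct2, THEN conjunct2, THEN conjunct2]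
  note B = big[THEN spec]
  note c1 = B[THEN conjunct1]
  note c2 = B[THEN conjunct2, THEN conjunct1]
  note c3 = B[THEN conjunct2, THEN conjunct2, THEN conjunct1]
  note c4 = B[THEN conjunct2, THEN conjunct2, THEN conjunct2, THEN conjunct1]
  note c5 = B[THEN conjunct2, THEN conjunct2, THEN conjunct2, THEN conjunct2, THEN conjunct1]
  note c6 = B[THEN conjunct2, THEN conjunct2, THEN conjunct2, THEN conjunct2, THEN conjunct2, THEN conjunct1]
  note c7 = B[THEN conjunct2, THEN conjunct2, THEN conjunct2, THEN conjunct2, THEN conjunct2, THEN conjunct2, THEN conjunct1]
  note c8 = B[THEN conjunct2, THEN conjunct2, THEN conjunct2, THEN conjunct2, THEN conjunct2, THEN conjunct2, THEN conjunct2, THEN conjunct1]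
  note c9 = B[THEN conjunct2, THEN conjunct2, THEN conjunct2, THEN conjunct2, THEN conjunct2, THEN conjunct2, THEN conjunct2, THEN conjunct2, THEN conjunct1]
  note c10 = B[THEN conjunct2, THEN conjunct2, THEN conjunct2, THEN conjunct2, THEN conjunct2, THEN conjunct2, THEN conjunct2, THEN conjunct2, THEN conjunct2, THEN conjunct1]
  note c11 = B[THEN conjunct2, THEN conjunct2, THEN conjunct2, THEN conjunct2, THEN conjunct2, THEN conjunct2, THEN conjunct2, THEN conjunct2, THEN conjunct2, THEN conjunct2, THEN conjunct1]
  note c12 = B[THEN conjunct2, THEN conjunct2, THEN conjunct2, THEN conjunct2, THEN conjunct2, THEN conjunct2, THEN conjunct2, THEN conjunct2, THEN conjunct2, THEN conjunct2, THEN conjunct2, THEN conjunct1]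
  note c13 = B[THEN conjunct2, THEN conjunct2, THEN conjunct2, THEN conjunct2, THEN conjunct2, THEN conjunct2, THEN conjunct2, THEN conjunct2, THEN conjunct2, THEN conjunct2, THEN conjunct2, THEN conjunct2]
  show "prob_space M" using sm by (rule conjunct1)
  show "\<And>t. subalgebra M (F t)" using filt by blast
  show "\<And>t. sets (F t) \<subseteq> sets (F (Suc t))" using filt by blast
  show "\<And>\<omega>. \<omega> \<in> space M \<Longrightarrow> N 0 \<omega> = N0" using N0f by blast
  show "\<And>\<omega> i. \<omega> \<in> space M \<Longrightarrow> i < N0 \<Longrightarrow> w 0 i \<omega> = 1 / real N0" using w0f by blast
  show "\<And>t. N t \<in> measurable (F t) (count_space UNIV)" using c1 by blast
  show "\<And>t i. w t i \<in> borel_measurable (restrict_space (F t) {\<omega>. i < N t \<omega>})" using c3 by blast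
  show "\<And>t i. C t i \<in> borel_measurable (restrict_space (F t) {\<omega>. i < N t \<omega>})" using c4 by blast
  show "\<And>t \<omega> i. \<omega> \<in> space M \<Longrightarrow> i < N t \<omega> \<Longrightarrow> C t i \<omega> > 0" using c5 by blast
  show "\<And>t \<omega> i. \<omega> \<in> space M \<Longrightarrow> i < N t \<omega> \<Longrightarrow> w t i \<omega> \<ge> 0" using c5 by blast
  show "\<And>t i. Ns t i \<in> measurable M (count_space UNIV)" using c6 by blast
  show "\<And>t i A. A \<in> sets (F t) \<Longrightarrow> (\<integral>\<^sup>+\<omega>. indicator (A \<inter> {\<omega>. i < N t \<omega>}) \<omega> * of_nat (Ns t i \<omega>) \<partial>M)
          = (\<integral>\<^sup>+\<omega>. indicator (A \<inter> {\<omega>. i < N t \<omega>}) \<omega> * ennreal (C t i \<omega>) \<partial>M)" using c7 by blast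
  show "\<And>t \<omega>. \<omega> \<in> space M \<Longrightarrow> mset (map (\<lambda>j. (hxi t j \<omega>, hw t j \<omega>)) [0..<N (Suc t) \<omega>])
          = (\<Sum>i<N t \<omega>. replicate_mset (Ns t i \<omega>) (xi t i \<omega>, w t i \<omega> / C t i \<omega>))" using c9 by blast
  show "\<And>t \<omega> j. \<omega> \<in> space M \<Longrightarrow> j < N (Suc t) \<omega> \<Longrightarrow> w (Suc t) j \<omega> = hw t j \<omega>" using c13[THEN conjunct2] by blast
qed




lemma sum_fin_ennreal:
  assumes "\<And>i. i < n \<Longrightarrow> f i \<ge> 0"
  shows "(\<Sum>i. if i < n then ennreal (f i) else 0) = ennreal (\<Sum>i<n. f i)"
proof -
  have "(\<Sum>i. if i < n then ennreal (f i) else 0) = (\<Sum>i<n. if i < n then ennreal (f i) else 0)"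
    by (rule suminf_finite) auto
  also have "\<dots> = (\<Sum>i<n. ennreal (f i))" by simp
  also have "\<dots> = ennreal (\<Sum>i<n. f i)" by (rule sum_ennreal) (simp add: assms)
  finally show ?thesis .
qed

theorem mainTheorem1:
  assumes "splitting_method M X K mu0 N0 F Fh N xi w C Ns hxi hw"
    and "\<exists>\<epsilon>>0. AE \<omega> in M. \<exists>\<^sub>\<infinity>t.
           \<bar>total_weight N w (Suc t) \<omega> / total_weight N w t \<omega> - 1\<bar> > \<epsilon>"
  shows "AE \<omega> in M. (\<lambda>t. total_weight N w t \<omega>) \<longlonglongrightarrow> 0"
proof -
  note E = sm_extract[OF assms(1)]
  have P: "prob_space M" by (rule E(1))
  interpret prob_space M by (rule P)
  have sub: "\<And>t. subalgebra M (F t)" by (rule E(2))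
  have spF: "\<And>t. space (F t) = space M" using sub by (simp add: subalgebra_def)
  define W where "W = total_weight N w"
  have Wnn: "\<And>t x. x \<in> space M \<Longrightarrow> W t x \<ge> 0"
    unfolding W_def total_weight_def by (auto intro!: sum_nonneg E(10))
  have WmF: "\<And>t. W t \<in> borel_measurable (F t)" unfolding W_def by (intro tw_meas E(6) E(7))
  have WmM: "\<And>t. W t \<in> borel_measurable M" by (rule measurable_from_subalg[OF sub WmF])
  have W0: "W 0 x \<le> 1" if x: "x \<in> space M" for x
  proof -
    have "W 0 x = (\<Sum>i<N0. 1 / real N0)" unfolding W_def total_weight_def using E(4)[OF x] E(5)[OF x] by simp
    also have "\<dots> \<le> 1" by simp
    finally show "W 0 x \<le> 1" .
  qed
  have fin: "(\<integral>\<^sup>+x. ennreal (W 0 x) \<partial>M) < \<infinity>"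
  proof -
    have "(\<integral>\<^sup>+x. ennreal (W 0 x) \<partial>M) \<le> (\<integral>\<^sup>+x. 1 \<partial>M)"
      by (intro nn_integral_mono) (simp add: W0 ennreal_le_1)
    also have "\<dots> = 1" by (simp add: emeasure_space_1)
    finally show ?thesis using le_less_trans by fastforce
  qed
  have mart: "(\<integral>\<^sup>+x. indicator A x * ennreal (W (Suc t) x) \<partial>M) = (\<integral>\<^sup>+x. indicator A x * ennreal (W t x) \<partial>M)"
    if A: "A \<in> sets (F t)" for t A
  proof -
    note [measurable] = E(6)[of t] E(11)[of t]
    have NmM[measurable]: "N t \<in> measurable M (count_space UNIV)" by (rule measurable_from_subalg[OF sub E(6)])
    have Om: "{\<omega>. i < N t \<omega>} \<inter> space (F t) \<in> sets (F t)" for i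
    proof -
      have "{\<omega> \<in> space (F t). i < N t \<omega>} \<in> sets (F t)" by measurable
      then show ?thesis by (simp add: Int_commute Collect_conj_eq[symmetric] Int_def)
    qed
    define q where "q i x = indicator {\<omega>. i < N t \<omega>} x *\<^sub>R (w t i x / C t i x)" for i x
    have qm: "q i \<in> borel_measurable (F t)" for i
    proof -
      have "(\<lambda>x. w t i x / C t i x) \<in> borel_measurable (restrict_space (F t) {\<omega>. i < N t \<omega>})"
        by (intro borel_measurable_divide E(7) E(8))
      then show ?thesis unfolding q_def by (subst (asm) borel_measurable_restrict_space_iff[OF Om])
    qed
    define g where "g i x = indicator A x * ennreal (q i x)" for i x
    have gm: "g i \<in> borel_measurable (F t)" for i
      unfolding g_def using qm[of i] A by measurable
    have gmM: "g i \<in> borel_measurable M" for i by (rule measurable_from_subalg[OF sub gm])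
    define Nr where "Nr i x = (if i < N t x then of_nat (Ns t i x) else 0 :: ennreal)" for i x
    have Nrm: "Nr i \<in> borel_measurable M" for i unfolding Nr_def by measurable
    define Cr where "Cr i x = ennreal (indicator {\<omega>. i < N t \<omega>} x *\<^sub>R C t i x)" for i x
    have Crm: "Cr i \<in> borel_measurable (F t)" for i
    proof -
      have "(\<lambda>x. indicator {\<omega>. i < N t \<omega>} x *\<^sub>R C t i x) \<in> borel_measurable (F t)"
        using E(8)[of t i] by (subst (asm) borel_measurable_restrict_space_iff[OF Om])
      then show ?thesis unfolding Cr_def by measurable
    qed
    have CrM: "Cr i \<in> borel_measurable M" for i by (rule measurable_from_subalg[OF sub Crm])
    have hyp: "(\<integral>\<^sup>+x. indicator B x * Nr i x \<partial>M) = (\<integral>\<^sup>+x. indicator B x * Cr i x \<partial>M)"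
      if B: "B \<in> sets (F t)" for B i
    proof -
      have "(\<integral>\<^sup>+x. indicator B x * Nr i x \<partial>M) = (\<integral>\<^sup>+\<omega>. indicator (B \<inter> {\<omega>. i < N t \<omega>}) \<omega> * of_nat (Ns t i \<omega>) \<partial>M)"
        by (intro nn_integral_cong) (auto simp: indicator_def Nr_def)
      also have "\<dots> = (\<integral>\<^sup>+\<omega>. indicator (B \<inter> {\<omega>. i < N t \<omega>}) \<omega> * ennreal (C t i \<omega>) \<partial>M)"
        by (rule E(12)[OF B])
      also have "\<dots> = (\<integral>\<^sup>+x. indicator B x * Cr i x \<partial>M)"
        by (intro nn_integral_cong) (auto simp: indicator_def Cr_def)
      finally show ?thesis .
    qed
    have ce: "(\<integral>\<^sup>+x. g i x * Nr i x \<partial>M) = (\<integral>\<^sup>+x. g i x * Cr i x \<partial>M)" for i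
      by (rule cond_ext[OF sub Nrm CrM hyp gm])
    have pa: "indicator A x * ennreal (W (Suc t) x) = (\<Sum>i. g i x * Nr i x)" if x: "x \<in> space M" for x
    proof (cases "x \<in> A")
      case True
      have WS: "W (Suc t) x = (\<Sum>i<N t x. real (Ns t i x) * (w t i x / C t i x))"
      proof -
        have "W (Suc t) x = (\<Sum>j<N (Suc t) x. hw t j x)"
          unfolding W_def total_weight_def by (intro sum.cong) (auto simp: E(14)[OF x])
        also have "\<dots> = (\<Sum>i<N t x. real (Ns t i x) * (w t i x / C t i x))"
          by (rule child_sum[OF E(13)[OF x]])
        finally show ?thesis .
      qed
      have nn: "0 \<le> real (Ns t i x) * (w t i x / C t i x)" if "i < N t x" for i
        using E(9)[OF x that] E(10)[OF x that] by simp
      have "(\<Sum>i. g i x * Nr i x) = (\<Sum>i. if i < N t x then ennreal (real (Ns t i x) * (w t i x / C t i x)) else 0)"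
      proof (intro suminf_cong)
        fix i show "g i x * Nr i x = (if i < N t x then ennreal (real (Ns t i x) * (w t i x / C t i x)) else 0)"
        proof (cases "i < N t x")
          case iT: True
          have g1: "g i x = ennreal (w t i x / C t i x)" using True iT by (simp add: g_def q_def)
          have n1: "Nr i x = ennreal (real (Ns t i x))" using iT by (simp add: Nr_def ennreal_of_nat_eq_real_of_nat)
          have "0 \<le> w t i x / C t i x" using E(9)[OF x iT] E(10)[OF x iT] by simp
          then show ?thesis using iT unfolding g1 n1 by (simp add: ennreal_mult[symmetric] mult.commute)
        next
          case False then show ?thesis by (simp add: Nr_def)
        qed
      qed
      also have "\<dots> = ennreal (W (Suc t) x)" unfolding WS by (rule sum_fin_ennreal[OF nn])
      finally show ?thesis using True by simp
    next
      case False
      then show ?thesis by (simp add: g_def)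
    qed
    have pb: "indicator A x * ennreal (W t x) = (\<Sum>i. g i x * Cr i x)" if x: "x \<in> space M" for x
    proof (cases "x \<in> A")
      case True
      have "(\<Sum>i. g i x * Cr i x) = (\<Sum>i. if i < N t x then ennreal (w t i x) else 0)"
      proof (intro suminf_cong)
        fix i show "g i x * Cr i x = (if i < N t x then ennreal (w t i x) else 0)"
        proof (cases "i < N t x")
          case iT: True
          have c: "0 < C t i x" "0 \<le> w t i x" using E(9)[OF x iT] E(10)[OF x iT] by auto
          have "g i x * Cr i x = ennreal (w t i x / C t i x) * ennreal (C t i x)"
            using True iT by (simp add: g_def q_def Cr_def)
          also have "\<dots> = ennreal (w t i x / C t i x * C t i x)" by (rule ennreal_mult[symmetric]) (use c in auto)
          also have "\<dots> = ennreal (w t i x)" using c by simp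
          finally show ?thesis using iT by simp
        next
          case False then show ?thesis by (simp add: Cr_def)
        qed
      qed
      also have "\<dots> = ennreal (W t x)" unfolding W_def total_weight_def
        by (rule sum_fin_ennreal) (rule E(10)[OF x])
      finally show ?thesis using True by simp
    next
      case False
      then show ?thesis by (simp add: g_def)
    qed
    have "(\<integral>\<^sup>+x. indicator A x * ennreal (W (Suc t) x) \<partial>M) = (\<integral>\<^sup>+x. (\<Sum>i. g i x * Nr i x) \<partial>M)"
      by (intro nn_integral_cong pa)
    also have "\<dots> = (\<Sum>i. \<integral>\<^sup>+x. g i x * Nr i x \<partial>M)"
      by (rule nn_integral_suminf) (use gmM Nrm in auto)
    also have "\<dots> = (\<Sum>i. \<integral>\<^sup>+x. g i x * Cr i x \<partial>M)" by (simp add: ce)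
    also have "\<dots> = (\<integral>\<^sup>+x. (\<Sum>i. g i x * Cr i x) \<partial>M)"
      by (rule nn_integral_suminf[symmetric]) (use gmM CrM in auto)
    also have "\<dots> = (\<integral>\<^sup>+x. indicator A x * ennreal (W t x) \<partial>M)"
      by (intro nn_integral_cong pb[symmetric])
    finally show ?thesis .
  qed
  have mart_le: "(\<integral>\<^sup>+x. indicator A x * ennreal (W (Suc t) x) \<partial>M) \<le> (\<integral>\<^sup>+x. indicator A x * ennreal (W t x) \<partial>M)"
    if "A \<in> sets (F t)" for t A using mart[OF that] by simp
  have EW: "(\<integral>\<^sup>+x. ennreal (W k x) \<partial>M) \<le> (\<integral>\<^sup>+x. ennreal (W 0 x) \<partial>M)" for k
  proof (induction k)
    case 0 then show ?case by simp
  next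
    case (Suc k)
    have sp: "space M \<in> sets (F k)" using sets.top[of "F k"] spF by simp
    have ii: "(\<integral>\<^sup>+x. indicator (space M) x * ennreal (W j x) \<partial>M) = (\<integral>\<^sup>+x. ennreal (W j x) \<partial>M)" for j
      by (rule nn_integral_cong) simp
    from mart_le[OF sp] have "(\<integral>\<^sup>+x. ennreal (W (Suc k) x) \<partial>M) \<le> (\<integral>\<^sup>+x. ennreal (W k x) \<partial>M)"
      unfolding ii .
    then show ?case using Suc by simp
  qed
  obtain \<epsilon> where ep: "\<epsilon> > 0" and H: "AE x in M. \<exists>\<^sub>\<infinity>t. \<bar>W (Suc t) x / W t x - 1\<bar> > \<epsilon>"
    using assms(2) unfolding W_def by blast
  have UP1: "AE x in M. of_rat a < (of_rat b :: real) \<longrightarrow>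
     ((\<forall>\<^sub>F n in sequentially. W n x < of_rat b) \<or> (\<forall>\<^sub>F n in sequentially. W n x > of_rat a))" for a b :: rat
  proof (cases "of_rat a < (of_rat b :: real)")
    case True
    show ?thesis using supermart_upcross[where W=W, OF P sub E(3) WmF Wnn mart_le fin True] by simp
  qed simp
  have UP: "AE x in M. \<forall>a b::rat. of_rat a < (of_rat b :: real) \<longrightarrow>
     ((\<forall>\<^sub>F n in sequentially. W n x < of_rat b) \<or> (\<forall>\<^sub>F n in sequentially. W n x > of_rat a))"
    using UP1 by (simp add: AE_all_countable)
  have FT: "AE x in M. \<not> filterlim (\<lambda>n. W n x) at_top sequentially"
    by (rule supermart_fatou[where W=W, OF P WmM EW fin])
  have "AE x in M. (\<lambda>t. W t x) \<longlonglongrightarrow> 0"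
    using H UP FT AE_space
  proof eventually_elim
    case (elim x)
    show ?case
    proof (rule final_path[where \<epsilon>=\<epsilon>])
      show "\<And>n. 0 \<le> W n x" using Wnn elim by auto
      show "\<not> filterlim (\<lambda>n. W n x) at_top sequentially" using elim by auto
      show "\<exists>\<^sub>F t in sequentially. \<epsilon> < \<bar>W (Suc t) x / W t x - 1\<bar>" using elim(1) by (simp add: cofinite_eq_sequentially)
      show "0 < \<epsilon>" by (rule ep)
      fix a b :: real assume ab: "a \<in> \<rat>" "b \<in> \<rat>" "a < b"
      then obtain ra rb where r: "a = of_rat ra" "b = of_rat rb" by (auto elim!: Rats_cases)
      show "(\<forall>\<^sub>F n in sequentially. W n x < b) \<or> (\<forall>\<^sub>F n in sequentially. a < W n x)"
        using elim(2) ab r by auto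
    qed
  qed
  then show ?thesis unfolding W_def .
qed


end
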